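(* Let $k\geqslant 5$. There exists a non-decreasing function $f:\mathbb{N}\to\mathbb{N}$ with $n\leqslant f(n)\leqslant R(K_n^{(k)})$ for all $n$, such that for all $c,C>0$ and any $n_0$, there is an $n>n_0$ such that $$R(H)\leqslant c f(n)\quad\text{or}\quad R(H)\geqslant C f(n)$$ for every $k$-graph $H$ on $n$ vertices.
   Context: A $k$-graph is a pair $H=(V,E)$ where every edge $e\in E$ is a $k$-element subset of the vertex set $V$. $K_n^{(k)}$ is the $k$-graph on $n$ vertices in which every $k$-element subset of vertices is an edge. For a $k$-graph $H$, the Ramsey number $R(H)$ is the smallest integer $N$ such that every red-blue colouring of the edges of $K_N^{(k)}$ contains a copy of $H$ all of whose edges have the same colour. *)

theory Defs
  imports Complex_Main
begin

definition kgraph :: "nat \<Rightarrow> nat \<Rightarrow> nat set set \<Rightarrow> bool" where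
  "kgraph k n E \<longleftrightarrow> E \<subseteq> {e. e \<subseteq> {0..<n} \<and> card e = k}"

definition complete_kgraph :: "nat \<Rightarrow> nat \<Rightarrow> nat set set" where
  "complete_kgraph k n = {e. e \<subseteq> {0..<n} \<and> card e = k}"

definition has_mono_copy :: "nat \<Rightarrow> nat set set \<Rightarrow> nat \<Rightarrow> (nat set \<Rightarrow> bool) \<Rightarrow> bool" where
  "has_mono_copy n E N chi \<longleftrightarrow>
     (\<exists>\<phi>. inj_on \<phi> {0..<n} \<and> \<phi> ` {0..<n} \<subseteq> {0..<N} \<and>
          ((\<forall>e\<in>E. chi (\<phi> ` e)) \<or> (\<forall>e\<in>E. \<not> chi (\<phi> ` e))))"

definition ramsey_number :: "nat \<Rightarrow> nat \<Rightarrow> nat set set \<Rightarrow> nat" where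
  "ramsey_number k n E =
     (LEAST N. \<forall>chi :: nat set \<Rightarrow> bool. has_mono_copy n E N chi)"

end

theory Submission
  imports Defs "HOL-Library.FuncSet" "HOL-Library.Ramsey"
begin

definition dl :: "nat \<Rightarrow> nat \<Rightarrow> nat" where
  "dl a b = (LEAST i. a div 2^(Suc i) = b div 2^(Suc i))"

lemma div_pow_mono_eq:
  assumes "(a::nat) div 2^i = b div 2^i" "i \<le> j"
  shows "a div 2^j = b div 2^j"
proof -
  have "2^j = 2^i * (2::nat)^(j-i)" using assms(2) by (simp add: power_add[symmetric])
  then show ?thesis using assms(1) by (simp add: div_mult2_eq)
qed

lemma dl_ex: "\<exists>i. (a::nat) div 2^(Suc i) = b div 2^(Suc i)"
proof -
  have "a + b < 2^(a+b)" by (rule less_exp)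
  moreover have "(2::nat)^(a+b) \<le> 2^(Suc (a+b))" by (rule power_increasing) auto
  ultimately have "a < 2^(Suc (a+b))" "b < 2^(Suc (a+b))" by linarith+
  then show ?thesis by (intro exI[of _ "a+b"]) simp
qed

lemma dl_le_iff: "dl a b \<le> l \<longleftrightarrow> a div 2^(Suc l) = b div 2^(Suc l)"
proof
  assume "dl a b \<le> l"
  moreover have "a div 2^(Suc (dl a b)) = b div 2^(Suc (dl a b))"
    unfolding dl_def using LeastI_ex[OF dl_ex] by blast
  ultimately show "a div 2^(Suc l) = b div 2^(Suc l)"
    using div_pow_mono_eq[of a "Suc (dl a b)" b "Suc l"] by simp
next
  assume "a div 2^(Suc l) = b div 2^(Suc l)"
  then show "dl a b \<le> l" unfolding dl_def by (rule Least_le)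
qed

lemma div_between:
  assumes "(a::nat) \<le> b" "b \<le> c" "a div q = c div q"
  shows "a div q = b div q" "b div q = c div q"
  using div_le_mono[OF assms(1), of q] div_le_mono[OF assms(2), of q] assms(3) by auto

lemma dl_max:
  assumes "(a::nat) \<le> b" "b \<le> c"
  shows "dl a c = max (dl a b) (dl b c)"
proof -
  have "\<And>l. dl a c \<le> l \<longleftrightarrow> max (dl a b) (dl b c) \<le> l"
    using div_between[OF assms] by (auto simp: dl_le_iff)
  then show ?thesis by (meson le_antisym order_refl)
qed

lemma par_lem: "(p::nat) div 2 = q div 2 \<Longrightarrow> p \<noteq> q \<Longrightarrow> p \<le> q \<Longrightarrow> even p \<and> odd q"
  by presburger

lemma dl_bits:
  assumes "(a::nat) < b"
  shows "even (a div 2^(dl a b))" "odd (b div 2^(dl a b))"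
proof -
  let ?i = "dl a b"
  have e1: "a div 2^(Suc ?i) = b div 2^(Suc ?i)" using dl_le_iff by blast
  have ne: "a div 2^?i \<noteq> b div 2^?i"
  proof (cases ?i)
    case 0 then show ?thesis using assms by simp
  next
    case (Suc j)
    have "\<not> dl a b \<le> j" using Suc by simp
    then show ?thesis using dl_le_iff Suc by metis
  qed
  have le: "a div 2^?i \<le> b div 2^?i" using assms by (simp add: div_le_mono)
  have "(a div 2^?i) div 2 = (b div 2^?i) div 2"
    using e1 by (metis div_mult2_eq power_Suc2)
  then show "even (a div 2^(dl a b))" "odd (b div 2^(dl a b))" using ne le par_lem
    by blast+
qed

lemma dl_neq:
  assumes "(a::nat) < b" "b < c"
  shows "dl a b \<noteq> dl b c"
  using dl_bits(2)[OF assms(1)] dl_bits(1)[OF assms(2)] by metis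

lemma dl_less:
  assumes "(a::nat) < b" "b < 2^m"
  shows "dl a b < m"
proof -
  have "m > 0" using assms by (cases m) auto
  have "a div 2^m = b div 2^m" using assms by simp
  then have "dl a b \<le> m - 1" using dl_le_iff[of a b "m-1"] \<open>m>0\<close> by simp
  then show ?thesis using \<open>m>0\<close> by simp
qed

definition enm :: "nat set \<Rightarrow> nat \<Rightarrow> nat" where
  "enm e l = sorted_list_of_set e ! l"

lemma enm_char:
  assumes "strict_mono_on {..<N} g" "l < N"
  shows "enm (g ` {..<N}) l = g l"
proof -
  have "sorted_list_of_set (g ` {..<N}) = map g [0..<N]"
  proof -
    have "sorted_wrt (<) (map g [0..<N])"
      unfolding sorted_wrt_iff_nth_less
    proof (intro allI impI)
      fix i j assume "i < j" "j < length (map g [0..<N])"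
      then show "map g [0..<N] ! i < map g [0..<N] ! j"
        using assms(1) by (simp add: strict_mono_on_def)
    qed
    moreover have "set (map g [0..<N]) = g ` {..<N}" by (simp add: atLeast0LessThan)
    ultimately have "sorted (map g [0..<N]) \<and> distinct (map g [0..<N]) \<and> set (map g [0..<N]) = g ` {..<N}"
      using strict_sorted_iff by blast
    then show ?thesis
      by (metis sorted_list_of_set_sort_remdups distinct_remdups_id sorted_sort_id)
  qed
  then show ?thesis using assms(2) by (simp add: enm_def)
qed

lemma enm_props:
  assumes "finite J"
  shows "strict_mono_on {..<card J} (enm J)" "enm J ` {..<card J} = J"
proof -
  let ?s = "sorted_list_of_set J"
  have s: "sorted_wrt (<) ?s" "length ?s = card J" "set ?s = J"
    using assms by (auto simp: strict_sorted_list_of_set)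
  show "strict_mono_on {..<card J} (enm J)"
    unfolding strict_mono_on_def enm_def
  proof (intro allI impI)
    fix r s assume "r \<in> {..<card J} \<and> s \<in> {..<card J} \<and> r < s"
    then show "?s ! r < ?s ! s" using s(1,2) unfolding sorted_wrt_iff_nth_less by auto
  qed
  show "enm J ` {..<card J} = J"
    using s(2,3) unfolding enm_def by (metis atLeast0LessThan image_set map_nth set_upt)
qed

lemma enm_in: "finite J \<Longrightarrow> l < card J \<Longrightarrow> enm J l \<in> J"
  using enm_props(2) by blast

definition incw :: "(nat \<Rightarrow> 'a::linorder) \<Rightarrow> nat \<Rightarrow> nat \<Rightarrow> bool" where
  "incw d k j \<longleftrightarrow> (\<forall>l. Suc l < k \<longrightarrow> d (j+l) < d (j + Suc l))"
definition decw :: "(nat \<Rightarrow> 'a::linorder) \<Rightarrow> nat \<Rightarrow> nat \<Rightarrow> bool" where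
  "decw d k j \<longleftrightarrow> (\<forall>l. Suc l < k \<longrightarrow> d (j + Suc l) < d (j+l))"

lemma core_red:
  fixes d :: "nat \<Rightarrow> 'a::linorder"
  assumes k: "k \<ge> 3" and n: "n \<ge> 3" and r: "r = 2*n+k-4"
    and dist: "\<And>i. Suc i < r - 1 \<Longrightarrow> d i \<noteq> d (Suc i)"
    and W: "\<And>j. j + k < r \<Longrightarrow> \<not> incw d k j \<Longrightarrow> \<not> decw d k j \<Longrightarrow> d j < d (Suc j)"
  shows "\<exists>p. p + n \<le> r - 1 \<and> (incw d n p \<or> decw d n p)"
proof (cases "\<forall>i. Suc i < r - 1 \<longrightarrow> d i < d (Suc i)")
  case True
  then have "incw d n 0" using r n k unfolding incw_def by auto
  moreover have "0 + n \<le> r - 1" using r n k by auto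
  ultimately show ?thesis by blast
next
  case False
  define P where "P i \<longleftrightarrow> Suc i < r - 1 \<and> d (Suc i) < d i" for i
  have exP: "\<exists>i. P i" using False dist unfolding P_def by (meson linorder_neqE)
  define j0 where "j0 = (LEAST i. P i)"
  have Pj0: "P j0" unfolding j0_def using exP by (rule LeastI_ex)
  have before: "d i < d (Suc i)" if "i < j0" for i
  proof -
    have "\<not> P i" using that unfolding j0_def using not_less_Least by blast
    moreover have "Suc i < r - 1" using Pj0 that unfolding P_def by auto
    ultimately show ?thesis using dist unfolding P_def by (meson linorder_neqE)
  qed
  have inc0: "incw d (Suc j0) 0" unfolding incw_def using before by auto
  show ?thesis
  proof (cases "j0 + k < r")
    case True
    have decs: "decw d k i" if "j0 \<le> i" "i + k < r" for i
      using that
    proof (induction i rule: dec_induct)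
      case base
      show ?case
      proof (rule ccontr)
        assume "\<not> decw d k j0"
        moreover have "\<not> incw d k j0"
        proof
          assume "incw d k j0"
          moreover have "Suc 0 < k" using k by simp
          ultimately have "d j0 < d (Suc j0)" unfolding incw_def by (metis add_0_right add_Suc_right)
          then show False using Pj0 unfolding P_def by (meson less_asym)
        qed
        ultimately have "d j0 < d (Suc j0)" using W base by blast
        then show False using Pj0 unfolding P_def by (meson less_asym)
      qed
    next
      case (step i)
      then have di: "decw d k i" by auto
      moreover have "Suc 1 < k" using k by simp
      ultimately have "d (i + Suc 1) < d (i + 1)" unfolding decw_def by blast
      then have desc: "d (Suc (Suc i)) < d (Suc i)" by simp
      show ?case
      proof (rule ccontr)
        assume "\<not> decw d k (Suc i)"
        moreover have "\<not> incw d k (Suc i)"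
        proof
          assume "incw d k (Suc i)"
          moreover have "Suc 0 < k" using k by simp
          ultimately have "d (Suc i) < d (Suc (Suc i))" unfolding incw_def by (metis add_0_right add_Suc_right)
          then show False using desc by (meson less_asym)
        qed
        ultimately have "d (Suc i) < d (Suc (Suc i))" using W step by blast
        then show False using desc by (meson less_asym)
      qed
    qed
    have decall: "d (Suc i) < d i" if "j0 \<le> i" "Suc i < r - 1" for i
    proof (cases "i + k < r")
      case True
      have "Suc 0 < k" using k by simp
      then have "d (i + Suc 0) < d (i + 0)" using decs[OF that(1) True] unfolding decw_def by blast
      then show ?thesis by simp
    next
      case False
      define q where "q = r - 1 - k"
      have q: "j0 \<le> q" "q + k < r" using \<open>j0 + k < r\<close> unfolding q_def by auto
      have "Suc (i - q) < k" using False that q_def q by auto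
      then have "d (q + Suc (i - q)) < d (q + (i - q))" using decs[OF q] unfolding decw_def by blast
      moreover have "q \<le> i" using False q_def by auto
      ultimately show ?thesis by (simp add: add.commute)
    qed
    show ?thesis
    proof (cases "n \<le> Suc j0")
      case True
      then have "incw d n 0" using inc0 unfolding incw_def by auto
      moreover have "0 + n \<le> r - 1" using r n k by auto
      ultimately show ?thesis by blast
    next
      case False
      have "decw d n j0" unfolding decw_def
      proof (intro allI impI)
        fix l assume "Suc l < n"
        then show "d (j0 + Suc l) < d (j0 + l)" using decall[of "j0 + l"] False r k by auto
      qed
      moreover have "j0 + n \<le> r - 1" using False r k by auto
      ultimately show ?thesis by blast
    qed
  next
    case False
    then have "incw d n 0" using inc0 n r unfolding incw_def by auto
    moreover have "0 + n \<le> r - 1" using r n k by auto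
    ultimately show ?thesis by blast
  qed
qed

definition monoset :: "(nat set \<Rightarrow> bool) \<Rightarrow> nat \<Rightarrow> nat set \<Rightarrow> bool" where
  "monoset \<chi> k S \<longleftrightarrow> (\<exists>b. \<forall>e. e \<subseteq> S \<and> card e = k \<longrightarrow> \<chi> e = b)"

definition good :: "nat \<Rightarrow> nat \<Rightarrow> nat \<Rightarrow> bool" where
  "good m k n \<longleftrightarrow> (\<exists>\<chi>. \<forall>S. S \<subseteq> {0..<m} \<and> card S = n \<longrightarrow> \<not> monoset \<chi> k S)"

definition upcol :: "(nat set \<Rightarrow> bool) \<Rightarrow> nat \<Rightarrow> nat set \<Rightarrow> bool" where
  "upcol \<chi> k e = (let D = (\<lambda>l. dl (enm e l) (enm e (Suc l))) in
     if incw D k 0 \<or> decw D k 0 then \<chi> (D ` {..<k}) else D 0 < D 1)"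


lemma incw_cong0: "(\<And>l. l < k \<Longrightarrow> D l = D' l) \<Longrightarrow> incw D k 0 \<longleftrightarrow> incw D' k 0"
  unfolding incw_def by (metis Suc_lessD add_0)

lemma decw_cong0: "(\<And>l. l < k \<Longrightarrow> D l = D' l) \<Longrightarrow> decw D k 0 \<longleftrightarrow> decw D' k 0"
  unfolding decw_def by (metis Suc_lessD add_0)

lemma upcol_image:
  assumes "strict_mono_on {..<Suc k} h" "k \<ge> 2"
  shows "upcol \<chi> k (h ` {..<Suc k}) =
    (let D = (\<lambda>l. dl (h l) (h (Suc l))) in
     if incw D k 0 \<or> decw D k 0 then \<chi> (D ` {..<k}) else D 0 < D 1)"
proof -
  define D where "D = (\<lambda>l. dl (h l) (h (Suc l)))"
  define D' where "D' = (\<lambda>l. dl (enm (h ` {..<Suc k}) l) (enm (h ` {..<Suc k}) (Suc l)))"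
  have eq: "D' l = D l" if "l < k" for l
    unfolding D_def D'_def using enm_char[OF assms(1)] that by simp
  have "incw D' k 0 \<longleftrightarrow> incw D k 0" by (rule incw_cong0) (rule eq)
  moreover have "decw D' k 0 \<longleftrightarrow> decw D k 0" by (rule decw_cong0) (rule eq)
  moreover have "D' ` {..<k} = D ` {..<k}" using eq by auto
  moreover have "D' 0 = D 0" "D' 1 = D 1" using eq assms(2) by auto
  ultimately show ?thesis unfolding upcol_def D_def[symmetric] D'_def[symmetric] Let_def
    by simp
qed

lemma strict_mono_on_inj: "strict_mono_on A (f::nat\<Rightarrow>nat) \<Longrightarrow> inj_on f A"
  unfolding strict_mono_on_def inj_on_def by (metis linorder_neqE_nat less_irrefl)

lemma run_strict:
  fixes d :: "nat \<Rightarrow> 'a::linorder"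
  assumes "\<And>i. p \<le> i \<Longrightarrow> Suc i < q \<Longrightarrow> d i < d (Suc i)"
  shows "p \<le> i \<Longrightarrow> i < j \<Longrightarrow> j < q \<Longrightarrow> d i < d j"
proof (induction j)
  case 0 then show ?case by simp
next
  case (Suc j)
  show ?case
  proof (cases "i = j")
    case True then show ?thesis using assms Suc by simp
  next
    case False
    then have "d i < d j" using Suc by simp
    also have "d j < d (Suc j)" using assms Suc by simp
    finally show ?thesis .
  qed
qed

lemma run_strict_dec:
  fixes d :: "nat \<Rightarrow> 'a::linorder"
  assumes "\<And>i. p \<le> i \<Longrightarrow> Suc i < q \<Longrightarrow> d (Suc i) < d i"
  shows "p \<le> i \<Longrightarrow> i < j \<Longrightarrow> j < q \<Longrightarrow> d j < d i"
proof (induction j)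
  case 0 then show ?case by simp
next
  case (Suc j)
  show ?case
  proof (cases "i = j")
    case True then show ?thesis using assms Suc by simp
  next
    case False
    then have "d j < d i" using Suc by simp
    have "d (Suc j) < d j" using assms Suc by simp
    then show ?thesis using \<open>d j < d i\<close> by simp
  qed
qed

lemma dval_inc:
  fixes x :: "nat \<Rightarrow> nat"
  assumes xm: "\<And>i j. i < j \<Longrightarrow> j < r \<Longrightarrow> x i < x j"
    and run: "\<And>i. p \<le> i \<Longrightarrow> Suc i < q \<Longrightarrow> dl (x i) (x (Suc i)) < dl (x (Suc i)) (x (Suc (Suc i)))"
    and q: "q < r"
  shows "p \<le> a \<Longrightarrow> a < b \<Longrightarrow> b \<le> q \<Longrightarrow> dl (x a) (x b) = dl (x (b-1)) (x b)"
proof (induction b)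
  case 0 then show ?case by simp
next
  case (Suc b)
  show ?case
  proof (cases "a = b")
    case True then show ?thesis by simp
  next
    case False
    then have ab: "a < b" using Suc by simp
    have IH: "dl (x a) (x b) = dl (x (b-1)) (x b)" using Suc ab by simp
    have "dl (x a) (x (Suc b)) = max (dl (x a) (x b)) (dl (x b) (x (Suc b)))"
      by (rule dl_max) (use xm ab Suc q in \<open>auto intro: less_imp_le\<close>)
    moreover have "dl (x (b-1)) (x b) < dl (x b) (x (Suc b))"
      using run[of "b-1"] ab Suc by simp
    ultimately show ?thesis using IH by simp
  qed
qed

lemma dval_dec:
  fixes x :: "nat \<Rightarrow> nat"
  assumes xm: "\<And>i j. i < j \<Longrightarrow> j < r \<Longrightarrow> x i < x j"
    and run: "\<And>i. p \<le> i \<Longrightarrow> Suc i < q \<Longrightarrow> dl (x (Suc i)) (x (Suc (Suc i))) < dl (x i) (x (Suc i))"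
    and q: "q < r"
  shows "p \<le> a \<Longrightarrow> a < b \<Longrightarrow> b \<le> q \<Longrightarrow> dl (x a) (x b) = dl (x a) (x (Suc a))"
proof (induction b)
  case 0 then show ?case by simp
next
  case (Suc b)
  show ?case
  proof (cases "a = b")
    case True then show ?thesis by simp
  next
    case False
    then have ab: "a < b" using Suc by simp
    have IH: "dl (x a) (x b) = dl (x a) (x (Suc a))" using Suc ab by simp
    have "dl (x a) (x (Suc b)) = max (dl (x a) (x b)) (dl (x b) (x (Suc b)))"
      by (rule dl_max) (use xm ab Suc q in \<open>auto intro: less_imp_le\<close>)
    moreover have "dl (x b) (x (Suc b)) < dl (x a) (x (Suc a))"
    proof -
      have "\<And>i. a \<le> i \<Longrightarrow> Suc i < Suc b \<Longrightarrow> dl (x (Suc i)) (x (Suc (Suc i))) < dl (x i) (x (Suc i))"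
        using run Suc by simp
      from run_strict_dec[where d="\<lambda>i. dl (x i) (x (Suc i))" and p=a and q="Suc b" and i=a and j=b, OF this] ab
      show ?thesis by simp
    qed
    ultimately show ?thesis using IH by simp
  qed
qed

lemma stepping_up:
  assumes k: "k \<ge> 3" and n: "n \<ge> 3" and g: "good m k n"
  shows "good (2^m) (Suc k) (2*n+k-4)"
proof -
  obtain \<chi> where chi: "\<And>S. S \<subseteq> {0..<m} \<Longrightarrow> card S = n \<Longrightarrow> \<not> monoset \<chi> k S"
    using g unfolding good_def by blast
  define r where "r = 2*n+k-4"
  have "\<forall>S. S \<subseteq> {0..<2^m} \<and> card S = r \<longrightarrow> \<not> monoset (upcol \<chi> k) (Suc k) S"
  proof (intro allI impI notI)
    fix S assume SS: "S \<subseteq> {0..<2^m} \<and> card S = r" and ms: "monoset (upcol \<chi> k) (Suc k) S"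
    obtain b where colB: "\<And>e. e \<subseteq> S \<Longrightarrow> card e = Suc k \<Longrightarrow> upcol \<chi> k e = b"
      using ms unfolding monoset_def by auto
    have finS: "finite S" using SS by (meson finite_atLeastLessThan rev_finite_subset)
    define x where "x = enm S"
    have xsm: "strict_mono_on {..<r} x" and ximg: "x ` {..<r} = S"
      using enm_props[OF finS] SS unfolding x_def by auto
    have xm: "x i < x j" if "i < j" "j < r" for i j
      using xsm that unfolding strict_mono_on_def by auto
    have xS: "x i \<in> S" if "i < r" for i using ximg that by blast
    have xlt: "x i < 2^m" if "i < r" for i using xS[OF that] SS by auto
    define d where "d i = dl (x i) (x (Suc i))" for i
    have dlt: "d i < m" if "Suc i < r" for i
      unfolding d_def by (rule dl_less[OF xm xlt]) (use that in auto)
    have dist: "d i \<noteq> d (Suc i)" if "Suc i < r - 1" for i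
      unfolding d_def by (rule dl_neq[OF xm xm]) (use that in auto)
    have sub: "(let D = (\<lambda>l. dl (x (h l)) (x (h (Suc l)))) in
               if incw D k 0 \<or> decw D k 0 then \<chi> (D ` {..<k}) else D 0 < D 1) = b"
      if hm: "strict_mono_on {..<Suc k} h" and hr: "h ` {..<Suc k} \<subseteq> {..<r}" for h
    proof -
      have xh: "strict_mono_on {..<Suc k} (x \<circ> h)"
        unfolding strict_mono_on_def
      proof (intro allI impI)
        fix u v assume "u \<in> {..<Suc k} \<and> v \<in> {..<Suc k} \<and> u < v"
        then show "(x \<circ> h) u < (x \<circ> h) v"
          using hm hr xm unfolding strict_mono_on_def by auto
      qed
      have "upcol \<chi> k ((x \<circ> h) ` {..<Suc k}) = b"
      proof (rule colB)
        show "(x \<circ> h) ` {..<Suc k} \<subseteq> S" using hr xS by auto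
        show "card ((x \<circ> h) ` {..<Suc k}) = Suc k"
          using card_image[OF strict_mono_on_inj[OF xh]] by simp
      qed
      then show ?thesis using upcol_image[OF xh, of \<chi>] k by simp
    qed
    have W: "(if incw d k j \<or> decw d k j then \<chi> ((\<lambda>l. d (j+l)) ` {..<k}) else d j < d (Suc j)) = b"
      if "j + k < r" for j
    proof -
      have hm: "strict_mono_on {..<Suc k} (\<lambda>l. j + l)" by (simp add: strict_mono_on_def)
      have hr: "(\<lambda>l. j + l) ` {..<Suc k} \<subseteq> {..<r}" using that by auto
      have "incw (\<lambda>l. d (j+l)) k 0 \<longleftrightarrow> incw d k j" "decw (\<lambda>l. d (j+l)) k 0 \<longleftrightarrow> decw d k j"
        unfolding incw_def decw_def by (simp_all add: add.assoc)
      moreover have De: "(\<lambda>l. dl (x (j+l)) (x (j+Suc l))) = (\<lambda>l. d (j+l))" by (simp add: d_def)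
      moreover have "(let D = (\<lambda>l. d (j+l)) in if incw D k 0 \<or> decw D k 0 then \<chi> (D ` {..<k}) else D 0 < D 1) = b"
        using sub[OF hm hr] by (simp only: De)
      ultimately show ?thesis using k by (auto simp: Let_def split: if_splits)
    qed
    obtain p where p: "p + n \<le> r - 1" "incw d n p \<or> decw d n p"
    proof (cases b)
      case True
      have "\<exists>p. p + n \<le> r - 1 \<and> (incw d n p \<or> decw d n p)"
      proof (rule core_red[OF k n r_def])
        show "\<And>i. Suc i < r - 1 \<Longrightarrow> d i \<noteq> d (Suc i)" by (rule dist)
        show "d j < d (Suc j)" if "j + k < r" "\<not> incw d k j" "\<not> decw d k j" for j
          using W[OF that(1)] that True by simp
      qed
      then show ?thesis using that by blast
    next
      case False
      define d' where "d' i = - int (d i)" for i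
      have iff1: "incw d' n p \<longleftrightarrow> decw d n p" "decw d' n p \<longleftrightarrow> incw d n p"
        "incw d' k p \<longleftrightarrow> decw d k p" "decw d' k p \<longleftrightarrow> incw d k p" for p
        unfolding incw_def decw_def d'_def by auto
      have "\<exists>p. p + n \<le> r - 1 \<and> (incw d' n p \<or> decw d' n p)"
      proof (rule core_red[OF k n r_def])
        show "\<And>i. Suc i < r - 1 \<Longrightarrow> d' i \<noteq> d' (Suc i)" using dist unfolding d'_def by simp
        show "d' j < d' (Suc j)" if "j + k < r" "\<not> incw d' k j" "\<not> decw d' k j" for j
        proof -
          have "\<not> d j < d (Suc j)" using W[OF that(1)] that False iff1 by simp
          moreover have "d j \<noteq> d (Suc j)" using dist[of j] that(1) k by simp
          ultimately show ?thesis unfolding d'_def by simp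
        qed
      qed
      then show ?thesis using that iff1 by blast
    qed
    define T where "T = d ` {p..<p+n}"
    have runlt: "p + n < r" using p(1) k n r_def by auto
    have Tsub: "T \<subseteq> {0..<m}" unfolding T_def using dlt runlt by auto
    have dmono: "(\<forall>i j. p \<le> i \<longrightarrow> i < j \<longrightarrow> j < p + n \<longrightarrow> d i < d j) \<or>
                 (\<forall>i j. p \<le> i \<longrightarrow> i < j \<longrightarrow> j < p + n \<longrightarrow> d j < d i)"
    proof (cases "incw d n p")
      case True
      have "d i < d (Suc i)" if "p \<le> i" "Suc i < p + n" for i
      proof -
        have "Suc (i-p) < n" using that by simp
        then have "d (p + (i-p)) < d (p + Suc (i-p))" using True unfolding incw_def by blast
        then show ?thesis using that by simp
      qed
      then show ?thesis using run_strict[of p "p+n" d] by blast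
    next
      case False
      then have D: "decw d n p" using p by simp
      have "d (Suc i) < d i" if "p \<le> i" "Suc i < p + n" for i
      proof -
        have "Suc (i-p) < n" using that by simp
        then have "d (p + Suc (i-p)) < d (p + (i-p))" using D unfolding decw_def by blast
        then show ?thesis using that by simp
      qed
      then show ?thesis using run_strict_dec[of p "p+n" d] by blast
    qed
    have dinj: "inj_on d {p..<p+n}"
      unfolding inj_on_def
    proof (intro ballI impI)
      fix i j assume ij: "i \<in> {p..<p+n}" "j \<in> {p..<p+n}" "d i = d j"
      show "i = j"
      proof (rule ccontr)
        assume "i \<noteq> j"
        then consider "i < j" | "j < i" by linarith
        then show False
        proof cases
          case 1 then show False using dmono ij by (metis atLeastLessThan_iff less_irrefl)
        next
          case 2 then show False using dmono ij by (metis atLeastLessThan_iff less_irrefl)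
        qed
      qed
    qed
    have cardT: "card T = n" unfolding T_def using card_image[OF dinj] by simp
    have "monoset \<chi> k T"
      unfolding monoset_def
    proof (intro exI allI impI)
      fix U assume U: "U \<subseteq> T \<and> card U = k"
      define J where "J = {i \<in> {p..<p+n}. d i \<in> U}"
      have JU: "d ` J = U" using U unfolding J_def T_def by auto
      have Jsub: "J \<subseteq> {p..<p+n}" unfolding J_def by auto
      have finJ: "finite J" using Jsub by (meson finite_atLeastLessThan rev_finite_subset)
      have cardJ: "card J = k"
        using card_image[OF inj_on_subset[OF dinj Jsub]] JU U by simp
      define js where "js = enm J"
      have jsm: "strict_mono_on {..<k} js" and jsimg: "js ` {..<k} = J"
        using enm_props[OF finJ] cardJ unfolding js_def by auto
      have jsr: "p \<le> js l \<and> js l < p + n" if "l < k" for l using jsimg Jsub that by auto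
      have jsl: "js u < js v" if "u < v" "v < k" for u v
        using jsm that unfolding strict_mono_on_def by auto
      have xm': "\<And>i j. i < j \<Longrightarrow> j < r \<Longrightarrow> x i < x j" by (rule xm)
      have mk: "\<chi> U = b" if hm: "strict_mono_on {..<Suc k} h" and hr: "h ` {..<Suc k} \<subseteq> {..<r}"
        and hv: "\<And>l. l < k \<Longrightarrow> dl (x (h l)) (x (h (Suc l))) = d (js l)"
        and hmon: "incw (\<lambda>l. d (js l)) k 0 \<or> decw (\<lambda>l. d (js l)) k 0" for h
      proof -
        define D where "D = (\<lambda>l. dl (x (h l)) (x (h (Suc l))))"
        have eq: "D l = d (js l)" if "l < k" for l using hv that unfolding D_def by simp
        have "incw D k 0 \<longleftrightarrow> incw (\<lambda>l. d (js l)) k 0" by (rule incw_cong0) (rule eq)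
        moreover have "decw D k 0 \<longleftrightarrow> decw (\<lambda>l. d (js l)) k 0" by (rule decw_cong0) (rule eq)
        ultimately have c: "incw D k 0 \<or> decw D k 0" using hmon by blast
        have "D ` {..<k} = d ` (js ` {..<k})" using eq by (auto simp: image_iff)
        then have DU: "D ` {..<k} = U" using jsimg JU by simp
        have "(if incw D k 0 \<or> decw D k 0 then \<chi> (D ` {..<k}) else D 0 < D 1) = b"
          using sub[OF hm hr] unfolding D_def Let_def by simp
        then show ?thesis using c DU by simp
      qed
      show "\<chi> U = b"
      proof (cases "\<forall>i j. p \<le> i \<longrightarrow> i < j \<longrightarrow> j < p + n \<longrightarrow> d i < d j")
        case True
        define h where "h l = (if l = 0 then js 0 else Suc (js (l - 1)))" for l
        have hm: "strict_mono_on {..<Suc k} h"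
          unfolding strict_mono_on_def
        proof (intro allI impI)
          fix u v assume uv: "u \<in> {..<Suc k} \<and> v \<in> {..<Suc k} \<and> u < v"
          show "h u < h v"
          proof (cases "u = 0")
            case True
            have "v - 1 < k" using uv by auto
            then have "js 0 \<le> js (v - 1)" using jsl[of 0 "v-1"] by (cases "v - 1 = 0") auto
            then show ?thesis using True uv unfolding h_def by auto
          next
            case False
            then show ?thesis using jsl[of "u-1" "v-1"] uv unfolding h_def by auto
          qed
        qed
        have hle: "h l \<le> js l" "p \<le> h l" if "l < k" for l
        proof -
          show "h l \<le> js l"
          proof (cases l)
            case 0 then show ?thesis unfolding h_def by simp
          next
            case (Suc l') then show ?thesis unfolding h_def using jsl[of l' l] that by simp
          qed
          show "p \<le> h l"
          proof (cases l)
            case 0 then show ?thesis unfolding h_def using jsr[of 0] that by simp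
          next
            case (Suc l') then show ?thesis unfolding h_def using jsr[of l'] that by simp
          qed
        qed
        have hS: "h (Suc l) = Suc (js l)" for l unfolding h_def by simp
        have hr: "h ` {..<Suc k} \<subseteq> {..<r}"
        proof
          fix y assume "y \<in> h ` {..<Suc k}"
          then obtain l where l: "l < Suc k" "y = h l" by auto
          show "y \<in> {..<r}"
          proof (cases l)
            case 0 then show ?thesis using l jsr[of 0] k runlt unfolding h_def by auto
          next
            case (Suc l') then show ?thesis using l jsr[of l'] runlt unfolding h_def by auto
          qed
        qed
        have rn: "dl (x i) (x (Suc i)) < dl (x (Suc i)) (x (Suc (Suc i)))" if "p \<le> i" "Suc i < p + n" for i
          using True that unfolding d_def by auto
        have hv: "dl (x (h l)) (x (h (Suc l))) = d (js l)" if "l < k" for l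
        proof -
          have "dl (x (h l)) (x (Suc (js l))) = dl (x (Suc (js l) - 1)) (x (Suc (js l)))"
            by (rule dval_inc[where x=x and r=r and p=p and q="p+n", OF xm' rn runlt]) (use hle[OF that] jsr[OF that] in auto)
          then show ?thesis unfolding hS d_def by simp
        qed
        have "incw (\<lambda>l. d (js l)) k 0"
          unfolding incw_def using True jsl jsr by auto
        then show ?thesis using mk[OF hm hr hv] by blast
      next
        case False
        then have dec: "\<forall>i j. p \<le> i \<longrightarrow> i < j \<longrightarrow> j < p + n \<longrightarrow> d j < d i" using dmono by blast
        define h where "h l = (if l < k then js l else Suc (js (k - 1)))" for l
        have hm: "strict_mono_on {..<Suc k} h"
          unfolding strict_mono_on_def
        proof (intro allI impI)
          fix u v assume uv: "u \<in> {..<Suc k} \<and> v \<in> {..<Suc k} \<and> u < v"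
          show "h u < h v"
          proof (cases "v < k")
            case True
            then show ?thesis using jsl[of u v] uv unfolding h_def by auto
          next
            case False
            have "u \<le> k - 1" "k - 1 < k" using uv False k by auto
            then have "js u \<le> js (k - 1)" using jsl[of u "k-1"] by (cases "u = k - 1") auto
            then show ?thesis using False uv unfolding h_def by auto
          qed
        qed
        have hr: "h ` {..<Suc k} \<subseteq> {..<r}"
        proof
          fix y assume "y \<in> h ` {..<Suc k}"
          then obtain l where l: "l < Suc k" "y = h l" by auto
          show "y \<in> {..<r}"
            using l jsr[of l] jsr[of "k-1"] k runlt unfolding h_def by (cases "l < k") auto
        qed
        have rn: "dl (x (Suc i)) (x (Suc (Suc i))) < dl (x i) (x (Suc i))" if "p \<le> i" "Suc i < p + n" for i
          using dec that unfolding d_def by auto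
        have hv: "dl (x (h l)) (x (h (Suc l))) = d (js l)" if "l < k" for l
        proof -
          have hl: "h l = js l" using that unfolding h_def by simp
          have hsl: "js l < h (Suc l) \<and> h (Suc l) \<le> p + n"
          proof (cases "Suc l < k")
            case True then show ?thesis using jsl[of l "Suc l"] jsr[of "Suc l"] unfolding h_def by auto
          next
            case False then have "l = k - 1" using that by simp
            then show ?thesis using False jsr[of l] that unfolding h_def by auto
          qed
          have "dl (x (js l)) (x (h (Suc l))) = dl (x (js l)) (x (Suc (js l)))"
            by (rule dval_dec[where x=x and r=r and p=p and q="p+n", OF xm' rn runlt]) (use hsl jsr[OF that] in auto)
          then show ?thesis unfolding hl d_def by simp
        qed
        have "decw (\<lambda>l. d (js l)) k 0"
          unfolding decw_def using dec jsl jsr by auto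
        then show ?thesis using mk[OF hm hr hv] by blast
      qed
    qed
    then show False using chi[OF Tsub cardT] by simp
  qed
  then show ?thesis unfolding good_def r_def by (rule exI[where x="upcol \<chi> k"])
qed

lemma lift_good:
  assumes g: "good m k n"
  shows "good m (Suc k) (Suc n)"
proof -
  obtain \<chi> where chi: "\<And>S. S \<subseteq> {0..<m} \<Longrightarrow> card S = n \<Longrightarrow> \<not> monoset \<chi> k S"
    using g unfolding good_def by blast
  define \<chi>' where "\<chi>' e = \<chi> (e - {Max e})" for e
  have "\<forall>S. S \<subseteq> {0..<m} \<and> card S = Suc n \<longrightarrow> \<not> monoset \<chi>' (Suc k) S"
  proof (intro allI impI notI)
    fix S assume SS: "S \<subseteq> {0..<m} \<and> card S = Suc n" and ms: "monoset \<chi>' (Suc k) S"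
    obtain b where colB: "\<And>e. e \<subseteq> S \<Longrightarrow> card e = Suc k \<Longrightarrow> \<chi>' e = b"
      using ms unfolding monoset_def by auto
    have finS: "finite S" using SS by (meson finite_atLeastLessThan rev_finite_subset)
    have ne: "S \<noteq> {}" using SS by auto
    define S' where "S' = S - {Max S}"
    have S'sub: "S' \<subseteq> {0..<m}" using SS unfolding S'_def by auto
    have cS': "card S' = n" using SS finS ne Max_in unfolding S'_def by (simp add: card_Diff_singleton)
    have "monoset \<chi> k S'"
      unfolding monoset_def
    proof (intro exI allI impI)
      fix e assume e: "e \<subseteq> S' \<and> card e = k"
      have fe: "finite e" using e finS unfolding S'_def by (meson finite_Diff rev_finite_subset)
      have notin: "Max S \<notin> e" using e unfolding S'_def by auto
      define e' where "e' = insert (Max S) e"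
      have "e' \<subseteq> S" using e Max_in[OF finS ne] unfolding e'_def S'_def by auto
      moreover have "card e' = Suc k" using e fe notin unfolding e'_def by simp
      ultimately have "\<chi>' e' = b" by (rule colB)
      moreover have "Max e' = Max S"
      proof -
        have "\<forall>y\<in>e. y \<le> Max S" using e finS unfolding S'_def by auto
        then show ?thesis unfolding e'_def using fe by (simp add: Max_insert2)
      qed
      ultimately show "\<chi> e = b" unfolding \<chi>'_def e'_def using notin by simp
    qed
    then show False using chi[OF S'sub cS'] by simp
  qed
  then show ?thesis unfolding good_def by (rule exI[where x="\<chi>'"])
qed

lemma lift_good_iter: "good m k n \<Longrightarrow> good m (k + j) (n + j)"
  by (induction j) (auto intro: lift_good)

lemma count_good:
  assumes nN: "n \<le> N" and ineq: "2 * (N choose n) < 2 ^ (n choose 2)"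
  shows "good N 2 n"
proof -
  define V where "V = {0..<N}"
  define A where "A = nsets V 2"
  have finA: "finite A" unfolding A_def V_def by (simp add: finite_imp_finite_nsets)
  define F where "F = PiE A (\<lambda>_. UNIV :: bool set)"
  define Bad where "Bad S b = PiE A (\<lambda>e. if e \<in> nsets S 2 then {b} else UNIV)" for S :: "nat set" and b :: bool
  have cardF: "card F = 2 ^ card A" unfolding F_def using finA by (simp add: card_PiE)
  have cardBad: "card (Bad S b) = 2 ^ (card A - (n choose 2))" if S: "S \<in> nsets V n" for S b
  proof -
    have fS: "finite S" "card S = n" "S \<subseteq> V" using S unfolding nsets_def by auto
    have sub: "nsets S 2 \<subseteq> A" unfolding A_def using fS(3) by (rule nsets_mono)
    have cS: "card (nsets S 2) = n choose 2" using fS by simp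
    have "card (Bad S b) = (\<Prod>e\<in>A. card (if e \<in> nsets S 2 then {b} else (UNIV::bool set)))"
      unfolding Bad_def using finA by (simp add: card_PiE)
    also have "\<dots> = (\<Prod>e\<in>A. (if e \<in> nsets S 2 then 1 else 2))"
      by (rule prod.cong) auto
    also have "\<dots> = 2 ^ card (A - nsets S 2)"
      using finA by (simp add: prod.If_cases Int_absorb2[OF sub] Diff_eq)
    also have "card (A - nsets S 2) = card A - (n choose 2)"
      using finA sub cS by (simp add: card_Diff_subset finite_subset)
    finally show ?thesis .
  qed
  define U where "U = (\<Union>S\<in>nsets V n. \<Union>b\<in>(UNIV::bool set). Bad S b)"
  have finN: "finite (nsets V n)" unfolding V_def by (simp add: finite_imp_finite_nsets)
  have "card U \<le> (\<Sum>S\<in>nsets V n. card (\<Union>b\<in>(UNIV::bool set). Bad S b))"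
    unfolding U_def by (rule card_UN_le[OF finN])
  also have "\<dots> \<le> (\<Sum>S\<in>nsets V n. 2 * 2 ^ (card A - (n choose 2)))"
  proof (rule sum_mono)
    fix S assume S: "S \<in> nsets V n"
    have "card (\<Union>b\<in>(UNIV::bool set). Bad S b) \<le> (\<Sum>b\<in>(UNIV::bool set). card (Bad S b))"
      by (rule card_UN_le) simp
    also have "\<dots> = 2 * 2 ^ (card A - (n choose 2))"
      using cardBad[OF S] by (simp add: UNIV_bool)
    finally show "card (\<Union>b\<in>(UNIV::bool set). Bad S b) \<le> 2 * 2 ^ (card A - (n choose 2))" .
  qed
  also have "\<dots> = (N choose n) * 2 * 2 ^ (card A - (n choose 2))"
    using card_nsets[of V n] unfolding V_def by simp
  also have "\<dots> < 2 ^ (n choose 2) * 2 ^ (card A - (n choose 2))"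
    using ineq by (simp add: mult.commute)
  also have "\<dots> = 2 ^ card A"
  proof -
    have "card A = N choose 2" unfolding A_def V_def by simp
    moreover have "n choose 2 \<le> N choose 2"
      unfolding choose_two by (rule div_le_mono) (use nN in \<open>simp add: mult_le_mono\<close>)
    ultimately show ?thesis by (simp add: power_add[symmetric])
  qed
  finally have "card U < card F" using cardF by simp
  moreover have finU: "finite U" unfolding U_def Bad_def using finN finA
    by (intro finite_UN_I) (auto intro!: finite_PiE)
  ultimately have "\<not> F \<subseteq> U" using card_mono[OF finU, of F] by linarith
  then obtain f where fF: "f \<in> F" and fU: "f \<notin> U" by blast
  have "\<forall>S. S \<subseteq> {0..<N} \<and> card S = n \<longrightarrow> \<not> monoset f 2 S"
  proof (intro allI impI notI)
    fix S assume SS: "S \<subseteq> {0..<N} \<and> card S = n" and ms: "monoset f 2 S"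
    obtain b where colB: "\<And>e. e \<subseteq> S \<Longrightarrow> card e = 2 \<Longrightarrow> f e = b"
      using ms unfolding monoset_def by auto
    have finS: "finite S" using SS by (meson finite_atLeastLessThan rev_finite_subset)
    have SV: "S \<in> nsets V n" using SS finS unfolding nsets_def V_def by simp
    have ext: "f \<in> extensional A" using fF unfolding F_def by (simp add: PiE_iff)
    have "\<forall>e\<in>A. f e \<in> (if e \<in> nsets S 2 then {b} else UNIV)"
    proof
      fix e assume "e \<in> A"
      show "f e \<in> (if e \<in> nsets S 2 then {b} else UNIV)"
      proof (cases "e \<in> nsets S 2")
        case True
        then have "e \<subseteq> S" "card e = 2" unfolding nsets_def by auto
        then have "f e = b" by (rule colB)
        then show ?thesis using True by simp
      qed simp
    qed
    then have "f \<in> Bad S b"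
      unfolding Bad_def using ext by (simp add: PiE_iff)
    then have "f \<in> U" unfolding U_def using SV by (intro UN_I[OF SV] UN_I[OF UNIV_I])
    then show False using fU by simp
  qed
  then show ?thesis unfolding good_def by (rule exI[where x=f])
qed

lemma good_trivial: "N < n \<Longrightarrow> good N k n"
proof -
  assume "N < n"
  have "\<forall>S. S \<subseteq> {0..<N} \<and> card S = n \<longrightarrow> \<not> monoset (\<lambda>_. True) k S"
  proof (intro allI impI)
    fix S assume "S \<subseteq> {0..<N} \<and> card S = n"
    then have "card S \<le> N" using card_mono[of "{0..<N}" S] by simp
    then show "\<not> monoset (\<lambda>_. True) k S" using \<open>N < n\<close> \<open>S \<subseteq> {0..<N} \<and> card S = n\<close> by simp
  qed
  then show ?thesis unfolding good_def by (rule exI[where x="\<lambda>_. True"])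
qed

lemma base_good:
  assumes "t \<ge> 1"
  shows "good (2^t) 2 (4*t)"
proof (cases "4*t \<le> 2^t")
  case False then show ?thesis by (intro good_trivial) simp
next
  case True
  show ?thesis
  proof (rule count_good[OF True])
    have "2 * (2^t choose (4*t)) \<le> 2 * (2^t)^(4*t)"
      using binomial_le_pow[OF True] by simp
    also have "\<dots> = 2^(1 + 4*t*t)" by (simp add: power_mult[symmetric] mult.commute)
    also have "\<dots> < 2^((4*t) choose 2)"
    proof (rule power_strict_increasing)
      have "(4*t) choose 2 = 4*t*(4*t-1) div 2" by (simp add: choose_two)
      also have "4*t*(4*t-1) = 2 * (8*t*t - 2*t)" by (simp add: algebra_simps diff_mult_distrib2)
      finally have "(4*t) choose 2 = 8*t*t - 2*t" by simp
      moreover have "1 + 4*t*t < 8*t*t - 2*t"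
      proof -
        have "t*t \<ge> t" using assms by simp
        then show ?thesis using assms by linarith
      qed
      ultimately show "1 + 4*t*t < (4*t) choose 2" by simp
    qed simp
    finally show "2 * (2^t choose (4*t)) < 2 ^ ((4*t) choose 2)" .
  qed
qed

lemma ramsey_exists:
  assumes "kgraph k n E"
  shows "\<exists>N. \<forall>\<chi>. has_mono_copy n E N \<chi>"
proof -
  obtain N :: nat where N: "partn_lst {..<N} [n,n] k" using ramsey_full[of "[n,n]" k] by blast
  have "\<forall>\<chi>. has_mono_copy n E N \<chi>"
  proof
    fix \<chi> :: "nat set \<Rightarrow> bool"
    define f where "f e = (if \<chi> e then 0 else 1::nat)" for e
    have "f \<in> nsets {..<N} k \<rightarrow> {..<length [n,n]}" unfolding f_def by (simp add: Pi_iff)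
    then obtain i where i: "i < length [n,n]" and mono: "monochromatic {..<N} ([n,n]!i) k f i"
      using N unfolding partn_lst_def by blast
    have nth: "[n,n]!i = n" using i by (cases i) (auto simp: nth_Cons')
    obtain H where H: "H \<in> nsets {..<N} n" and fH: "f ` nsets H k \<subseteq> {i}"
      using mono unfolding monochromatic_def nth by blast
    have finH: "finite H" and cH: "card H = n" and HN: "H \<subseteq> {..<N}"
      using H unfolding nsets_def by auto
    obtain \<phi> where bij: "bij_betw \<phi> {0..<n} H" using ex_bij_betw_nat_finite[OF finH] cH by auto
    have inj: "inj_on \<phi> {0..<n}" and img: "\<phi> ` {0..<n} = H" using bij unfolding bij_betw_def by auto
    have col: "f (\<phi> ` e) = i" if "e \<in> E" for e
    proof -
      have "e \<subseteq> {0..<n}" "card e = k" using assms that unfolding kgraph_def by auto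
      moreover have "finite e" using \<open>e \<subseteq> {0..<n}\<close> by (meson finite_atLeastLessThan rev_finite_subset)
      ultimately have "\<phi> ` e \<in> nsets H k"
        using inj img unfolding nsets_def by (auto simp: card_image inj_on_subset)
      then show ?thesis using fH by blast
    qed
    show "has_mono_copy n E N \<chi>"
      unfolding has_mono_copy_def
    proof (intro exI conjI)
      show "inj_on \<phi> {0..<n}" by (rule inj)
      show "\<phi> ` {0..<n} \<subseteq> {0..<N}" using img HN by auto
      show "(\<forall>e\<in>E. \<chi> (\<phi> ` e)) \<or> (\<forall>e\<in>E. \<not> \<chi> (\<phi> ` e))"
      proof (cases "i = 0")
        case True
        have "\<forall>e\<in>E. \<chi> (\<phi> ` e)"
        proof
          fix e assume "e \<in> E"
          from col[OF this] True show "\<chi> (\<phi> ` e)" unfolding f_def by (cases "\<chi> (\<phi> ` e)") auto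
        qed
        then show ?thesis by (rule disjI1)
      next
        case False
        have "\<forall>e\<in>E. \<not> \<chi> (\<phi> ` e)"
        proof
          fix e assume "e \<in> E"
          from col[OF this] False show "\<not> \<chi> (\<phi> ` e)" unfolding f_def by (cases "\<chi> (\<phi> ` e)") auto
        qed
        then show ?thesis by (rule disjI2)
      qed
    qed
  qed
  then show ?thesis by blast
qed

lemma kgraph_complete: "kgraph k n (complete_kgraph k n)"
  unfolding kgraph_def complete_kgraph_def by simp

lemma mono_copy_complete:
  assumes "has_mono_copy n (complete_kgraph k n) N \<chi>"
  shows "\<exists>S. S \<subseteq> {0..<N} \<and> card S = n \<and> monoset \<chi> k S"
proof -
  obtain \<phi> where inj: "inj_on \<phi> {0..<n}" and sub: "\<phi> ` {0..<n} \<subseteq> {0..<N}"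
    and col: "(\<forall>e\<in>complete_kgraph k n. \<chi> (\<phi> ` e)) \<or> (\<forall>e\<in>complete_kgraph k n. \<not> \<chi> (\<phi> ` e))"
    using assms unfolding has_mono_copy_def by blast
  define S where "S = \<phi> ` {0..<n}"
  have cS: "card S = n" unfolding S_def using card_image[OF inj] by simp
  have pre: "\<exists>e'. e' \<in> complete_kgraph k n \<and> e = \<phi> ` e'" if "e \<subseteq> S" "card e = k" for e
  proof -
    define e' where "e' = {i \<in> {0..<n}. \<phi> i \<in> e}"
    have ee: "\<phi> ` e' = e" using that(1) unfolding e'_def S_def by auto
    have "e' \<subseteq> {0..<n}" unfolding e'_def by auto
    then have "card e' = k" using card_image[OF inj_on_subset[OF inj]] ee that(2) by metis
    then have "e' \<in> complete_kgraph k n" unfolding complete_kgraph_def e'_def by auto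
    then show ?thesis using ee by blast
  qed
  have "monoset \<chi> k S"
    unfolding monoset_def
  proof (cases "\<forall>e\<in>complete_kgraph k n. \<chi> (\<phi> ` e)")
    case True
    show "\<exists>b. \<forall>e. e \<subseteq> S \<and> card e = k \<longrightarrow> \<chi> e = b"
    proof (intro exI[where x=True] allI impI)
      fix e assume "e \<subseteq> S \<and> card e = k"
      then obtain e' where "e' \<in> complete_kgraph k n" "e = \<phi> ` e'" using pre by blast
      then show "\<chi> e = True" using True by simp
    qed
  next
    case False
    then have F: "\<forall>e\<in>complete_kgraph k n. \<not> \<chi> (\<phi> ` e)" using col by blast
    show "\<exists>b. \<forall>e. e \<subseteq> S \<and> card e = k \<longrightarrow> \<chi> e = b"
    proof (intro exI[where x=False] allI impI)
      fix e assume "e \<subseteq> S \<and> card e = k"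
      then obtain e' where "e' \<in> complete_kgraph k n" "e = \<phi> ` e'" using pre by blast
      then show "\<chi> e = False" using F by simp
    qed
  qed
  then show ?thesis using cS sub unfolding S_def by blast
qed

lemma good_ramsey:
  assumes "good m k n"
  shows "m < ramsey_number k n (complete_kgraph k n)"
proof -
  obtain \<chi> where chi: "\<And>S. S \<subseteq> {0..<m} \<Longrightarrow> card S = n \<Longrightarrow> \<not> monoset \<chi> k S"
    using assms unfolding good_def by blast
  let ?P = "\<lambda>N. \<forall>\<chi>. has_mono_copy n (complete_kgraph k n) N \<chi>"
  have ex: "\<exists>N. ?P N" by (rule ramsey_exists[OF kgraph_complete])
  have notP: "\<not> ?P N" if "N \<le> m" for N
  proof
    assume "?P N"
    then obtain S where "S \<subseteq> {0..<N}" "card S = n" "monoset \<chi> k S"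
      using mono_copy_complete by blast
    moreover have "{0..<N} \<subseteq> {0..<m}" using that by auto
    ultimately show False using chi by blast
  qed
  have "?P (ramsey_number k n (complete_kgraph k n))"
    unfolding ramsey_number_def by (rule LeastI_ex[OF ex])
  then show ?thesis using notP not_le by blast
qed

lemma ramsey_le_complete:
  assumes "kgraph k n E"
  shows "ramsey_number k n E \<le> ramsey_number k n (complete_kgraph k n)"
proof -
  let ?P = "\<lambda>N. \<forall>\<chi>. has_mono_copy n (complete_kgraph k n) N \<chi>"
  have ex: "\<exists>N. ?P N" by (rule ramsey_exists[OF kgraph_complete])
  have PK: "?P (ramsey_number k n (complete_kgraph k n))"
    unfolding ramsey_number_def by (rule LeastI_ex[OF ex])
  have sub: "E \<subseteq> complete_kgraph k n" using assms unfolding kgraph_def complete_kgraph_def by auto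
  have "\<forall>\<chi>. has_mono_copy n E (ramsey_number k n (complete_kgraph k n)) \<chi>"
  proof
    fix \<chi>
    obtain \<phi> where "inj_on \<phi> {0..<n}" "\<phi> ` {0..<n} \<subseteq> {0..<ramsey_number k n (complete_kgraph k n)}"
      "(\<forall>e\<in>complete_kgraph k n. \<chi> (\<phi> ` e)) \<or> (\<forall>e\<in>complete_kgraph k n. \<not> \<chi> (\<phi> ` e))"
      using PK unfolding has_mono_copy_def by blast
    moreover have "(\<forall>e\<in>E. \<chi> (\<phi> ` e)) \<or> (\<forall>e\<in>E. \<not> \<chi> (\<phi> ` e))"
      using calculation(3) sub by blast
    ultimately show "has_mono_copy n E (ramsey_number k n (complete_kgraph k n)) \<chi>"
      unfolding has_mono_copy_def by blast
  qed
  then show ?thesis unfolding ramsey_number_def[of k n E] by (rule Least_le)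
qed

lemma n_le_ramsey_complete: "n \<le> ramsey_number k n (complete_kgraph k n)"
proof -
  let ?P = "\<lambda>N. \<forall>\<chi>. has_mono_copy n (complete_kgraph k n) N \<chi>"
  have ex: "\<exists>N. ?P N" by (rule ramsey_exists[OF kgraph_complete])
  have PK: "?P (ramsey_number k n (complete_kgraph k n))"
    unfolding ramsey_number_def by (rule LeastI_ex[OF ex])
  then obtain \<phi> where "inj_on \<phi> {0..<n}" "\<phi> ` {0..<n} \<subseteq> {0..<ramsey_number k n (complete_kgraph k n)}"
    unfolding has_mono_copy_def by blast
  from card_inj_on_le[OF this] show ?thesis by simp
qed

lemma ramsey_complete_mono:
  assumes "n \<le> n'"
  shows "ramsey_number k n (complete_kgraph k n) \<le> ramsey_number k n' (complete_kgraph k n')"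
proof -
  let ?P = "\<lambda>N. \<forall>\<chi>. has_mono_copy n' (complete_kgraph k n') N \<chi>"
  have ex: "\<exists>N. ?P N" by (rule ramsey_exists[OF kgraph_complete])
  have PK: "?P (ramsey_number k n' (complete_kgraph k n'))"
    unfolding ramsey_number_def by (rule LeastI_ex[OF ex])
  have ss: "complete_kgraph k n \<subseteq> complete_kgraph k n'" "{0..<n} \<subseteq> {0..<n'}"
    using assms unfolding complete_kgraph_def by auto
  have "\<forall>\<chi>. has_mono_copy n (complete_kgraph k n) (ramsey_number k n' (complete_kgraph k n')) \<chi>"
  proof
    fix \<chi>
    obtain \<phi> where "inj_on \<phi> {0..<n'}" "\<phi> ` {0..<n'} \<subseteq> {0..<ramsey_number k n' (complete_kgraph k n')}"
      "(\<forall>e\<in>complete_kgraph k n'. \<chi> (\<phi> ` e)) \<or> (\<forall>e\<in>complete_kgraph k n'. \<not> \<chi> (\<phi> ` e))"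
      using PK unfolding has_mono_copy_def by blast
    moreover have "(\<forall>e\<in>complete_kgraph k n. \<chi> (\<phi> ` e)) \<or> (\<forall>e\<in>complete_kgraph k n. \<not> \<chi> (\<phi> ` e))"
      using calculation(3) ss(1) by blast
    moreover have "inj_on \<phi> {0..<n}" using calculation(1) ss(2) by (rule inj_on_subset)
    moreover have "\<phi> ` {0..<n} \<subseteq> {0..<ramsey_number k n' (complete_kgraph k n')}"
      using calculation(2) ss(2) by blast
    ultimately show "has_mono_copy n (complete_kgraph k n) (ramsey_number k n' (complete_kgraph k n')) \<chi>"
      unfolding has_mono_copy_def by blast
  qed
  then show ?thesis unfolding ramsey_number_def[of k n "complete_kgraph k n"] by (rule Least_le)
qed

lemma chain_good:
  assumes t: "t \<ge> 1" and k: "k \<ge> 5"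
  shows "good (2^(2^(2^t))) k (16*t + k - 3)"
proof -
  have g1: "good (2^t) 3 (Suc (4*t))" using lift_good[OF base_good[OF t]] by (simp add: numeral_3_eq_3)
  have g2': "good (2^(2^t)) (Suc 3) (2*(Suc (4*t)) + 3 - 4)"
    by (rule stepping_up[OF _ _ g1]) (use t in auto)
  have e2: "2*(Suc (4*t)) + 3 - 4 = 8*t+1" "Suc 3 = (4::nat)" by auto
  have g2: "good (2^(2^t)) 4 (8*t+1)" using g2' unfolding e2 .
  have g3': "good (2^(2^(2^t))) (Suc 4) (2*(8*t+1) + 4 - 4)"
    by (rule stepping_up[OF _ _ g2]) (use t in auto)
  have e3: "2*(8*t+1) + 4 - 4 = 16*t+2" "Suc 4 = (5::nat)" by auto
  have g3: "good (2^(2^(2^t))) 5 (16*t+2)" using g3' unfolding e3 .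
  have "good (2^(2^(2^t))) (5 + (k-5)) (16*t+2 + (k-5))" by (rule lift_good_iter[OF g3])
  moreover have "5 + (k-5) = k" "16*t+2 + (k-5) = 16*t + k - 3" using k by auto
  ultimately show ?thesis by metis
qed

lemma growth:
  assumes k: "k \<ge> 5"
  shows "\<exists>n > n0. (A + n) * L^(2*(2^(n choose k)+1)) \<le> ramsey_number k n (complete_kgraph k n)"
proof -
  define B where "B = A + L + n0 + 1"
  define v where "v = B + k*(k+7) + 2"
  define t where "t = v*v"
  define n where "n = 16*t + k - 3"
  define C where "C = n choose k"
  define P where "P = (2*v+5+k)*k"
  define Q where "Q = B + n"
  have v2: "v \<ge> 2" unfolding v_def by simp
  have tv: "v \<le> t" unfolding t_def using v2 by simp
  have t1: "t \<ge> 1" using tv v2 by simp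
  have RK: "2^(2^(2^t)) < ramsey_number k n (complete_kgraph k n)"
    unfolding n_def by (rule good_ramsey[OF chain_good[OF t1 k]])
  have nn0: "n > n0"
  proof -
    have "n0 < v" unfolding v_def B_def by simp
    also have "v \<le> t" by (rule tv)
    also have "t \<le> n" unfolding n_def using k by simp
    finally show ?thesis .
  qed
  have kn: "k \<le> n" unfolding n_def using t1 by simp
  have vv: "v*v < 2^v * 2^v" using less_exp[of v] by (simp add: mult_strict_mono)
  have n_le: "n \<le> 2^(2*v+5+k)"
  proof -
    have "n \<le> 16*(v*v) + k" unfolding n_def t_def by simp
    also have "\<dots> \<le> 16*(2^v*2^v) + 2^k"
    proof -
      have "k < 2^k" by (rule less_exp)
      then show ?thesis using vv by linarith
    qed
    also have "16*(2^v*2^v) = (2::nat)^(2*v+4)"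
    proof -
      have "(2::nat)^(2*v+4) = 2^v*2^v*2^4" by (simp only: mult_2 power_add)
      then show ?thesis by simp
    qed
    also have "(2::nat)^(2*v+4) + 2^k \<le> 2^(2*v+4+k) + 2^(2*v+4+k)"
    proof -
      have "(2::nat)^(2*v+4) \<le> 2^(2*v+4+k)" by (rule power_increasing) auto
      moreover have "(2::nat)^k \<le> 2^(2*v+4+k)" by (rule power_increasing) auto
      ultimately show ?thesis by linarith
    qed
    also have "\<dots> = 2^(2*v+5+k)"
    proof -
      have e: "2*v+5+k = Suc (2*v+4+k)" by simp
      show ?thesis by (subst e) (simp only: power_Suc mult_2)
    qed
    finally show ?thesis .
  qed
  have Pge: "2*v+5+k \<le> P" unfolding P_def using k by simp
  have "(2::nat)^(2*v+5+k) \<le> 2^P" by (rule power_increasing[OF Pge]) simp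
  then have n_le2: "n \<le> 2^P" using n_le by linarith
  have C_le: "C \<le> 2^P"
  proof -
    have "C \<le> n^k" unfolding C_def by (rule binomial_le_pow[OF kn])
    also have "\<dots> \<le> (2^(2*v+5+k))^k" by (rule power_mono[OF n_le]) simp
    also have "\<dots> = 2^P" unfolding P_def by (simp add: power_mult)
    finally show ?thesis .
  qed
  have B3: "B + 3 \<le> 2^P"
  proof -
    have "k*(k+7) \<ge> 1" using k by simp
    then have "B + 3 \<le> v" unfolding v_def by simp
    also have "v \<le> P" using Pge by simp
    also have "P < 2^P" by (rule less_exp)
    finally show ?thesis by simp
  qed
  have Pt: "P + 2 \<le> t"
  proof -
    have a: "2*v+5+k \<le> (k+7)*v"
    proof -
      have "k \<le> k*v" using v2 by simp
      moreover have "5 \<le> 5*v" using v2 by simp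
      moreover have "(k+7)*v = k*v + 7*v" by (simp add: algebra_simps)
      ultimately show ?thesis by linarith
    qed
    have "P \<le> (k+7)*v*k" unfolding P_def using a by simp
    also have "\<dots> = (k*(k+7))*v" by simp
    also have "\<dots> \<le> (v-2)*v" by (rule mult_le_mono1) (simp add: v_def)
    finally have "P \<le> (v-2)*v" .
    moreover have "(v-2)*v + 2 \<le> v*v"
    proof -
      have h: "2*v \<le> v*v" using mult_le_mono1[OF v2, of v] .
      have "(v-2)*v = v*v - 2*v" by (simp add: diff_mult_distrib)
      then show ?thesis using h v2 by linarith
    qed
    ultimately show ?thesis unfolding t_def by simp
  qed
  have sum_le: "Q + 3 + C \<le> 2^t"
  proof -
    have "Q + 3 + C = (B + 3) + n + C" unfolding Q_def by simp
    also have "\<dots> \<le> 2^P + 2^P + 2^P" using B3 n_le2 C_le by simp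
    also have "\<dots> \<le> 2^(P+2)" by simp
    also have "\<dots> \<le> 2^t" using Pt by (intro power_increasing) auto
    finally show ?thesis .
  qed
  have Q1: "Q \<ge> 1" unfolding Q_def B_def by simp
  have AQ: "A + n \<le> Q" "L \<le> Q" unfolding Q_def B_def by auto
  have C1: "(1::nat) \<le> 2^C" by simp
  have "(A + n) * L^(2*(2^C+1)) \<le> Q * Q^(2*(2^C+1))"
    using AQ by (intro mult_le_mono power_mono) auto
  also have "\<dots> = Q^(Suc (2*(2^C+1)))" by (rule power_Suc[symmetric])
  also have "\<dots> \<le> Q^(5*2^C)"
  proof (rule power_increasing)
    have gen: "\<And>x::nat. 1 \<le> x \<Longrightarrow> Suc (2*(x+1)) \<le> 5*x" by arith
    show "Suc (2*(2^C+1)) \<le> 5*2^C" using gen[OF C1] .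
  qed (rule Q1)
  also have "\<dots> \<le> (2^Q)^(5*2^C)" using less_exp[of Q] by (intro power_mono) auto
  also have "\<dots> = 2^(Q*(5*2^C))" by (simp add: power_mult)
  also have "\<dots> \<le> 2^(2^(Q+3+C))"
  proof (rule power_increasing)
    have "Q < 2^Q" by (rule less_exp)
    then have "5*Q \<le> 8 * 2^Q" by linarith
    then have "Q*(5*2^C) \<le> (8*2^Q)*2^C" by simp
    also have "\<dots> = 2^(Q+3+C)" by (simp add: power_add)
    finally show "Q*(5*2^C) \<le> 2^(Q+3+C)" .
  qed simp
  also have "\<dots> \<le> 2^(2^(2^t))" using sum_le by (intro power_increasing) auto
  also have "\<dots> < ramsey_number k n (complete_kgraph k n)" by (rule RK)
  finally show ?thesis using nn0 unfolding C_def by (intro exI[where x=n]) simp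
qed

lemma gap_pigeon:
  fixes V :: "nat set"
  assumes finV: "finite V" and cV: "card V \<le> s" and L: "L \<ge> 1"
  shows "\<exists>i \<le> s. \<forall>v\<in>V. \<not> (a*L^(2*i) \<le> v \<and> v < a*L^(2*i+2))"
proof (rule ccontr)
  assume "\<not> ?thesis"
  then have "\<forall>i. \<exists>v. i \<le> s \<longrightarrow> v \<in> V \<and> a*L^(2*i) \<le> v \<and> v < a*L^(2*i+2)" by blast
  then obtain g where g: "\<And>i. i \<le> s \<Longrightarrow> g i \<in> V \<and> a*L^(2*i) \<le> g i \<and> g i < a*L^(2*i+2)"
    by metis
  have lt: "g i < g j" if "i < j" "j \<le> s" for i j
  proof -
    have "g i < a*L^(2*i+2)" using g[of i] that by simp
    also have "\<dots> \<le> a*L^(2*j)"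
      using that L by (intro mult_le_mono2 power_increasing) auto
    also have "\<dots> \<le> g j" using g[of j] that by simp
    finally show ?thesis .
  qed
  have inj: "inj_on g {..s}"
    unfolding inj_on_def
  proof (intro ballI impI)
    fix i j assume ij: "i \<in> {..s}" "j \<in> {..s}" "g i = g j"
    show "i = j"
    proof (rule ccontr)
      assume "i \<noteq> j"
      then consider "i < j" | "j < i" by linarith
      then show False
      proof cases
        case 1 then show False using lt[of i j] ij by simp
      next
        case 2 then show False using lt[of j i] ij by simp
      qed
    qed
  qed
  have "g ` {..s} \<subseteq> V" using g by auto
  from card_inj_on_le[OF inj this finV] have "Suc s \<le> card V" by simp
  then show False using cV by simp
qed

definition gapc :: "nat \<Rightarrow> nat \<Rightarrow> nat \<Rightarrow> nat \<Rightarrow> bool" where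
  "gapc k n g L \<longleftrightarrow> (\<forall>E. kgraph k n E \<longrightarrow>
      ramsey_number k n E * L \<le> g \<or> g * L \<le> ramsey_number k n E)"

lemma complete_eq_nsets: "complete_kgraph k n = nsets {0..<n} k"
  unfolding complete_kgraph_def nsets_def by (auto intro: rev_finite_subset)

lemma gap_main:
  assumes big: "(A + n) * L^(2*(2^(n choose k)+1)) \<le> ramsey_number k n (complete_kgraph k n)"
    and L: "L \<ge> 1"
  shows "\<exists>g. A \<le> g \<and> n \<le> g \<and> g \<le> ramsey_number k n (complete_kgraph k n) \<and> gapc k n g L"
proof -
  define K where "K = complete_kgraph k n"
  define V where "V = (\<lambda>E. ramsey_number k n E) ` Pow K"
  define s :: nat where "s = 2^(n choose k)"
  have finK: "finite K" unfolding K_def complete_eq_nsets by (simp add: finite_imp_finite_nsets)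
  have cK: "card K = n choose k" unfolding K_def complete_eq_nsets by simp
  have finV: "finite V" unfolding V_def using finK by simp
  have cV: "card V \<le> s"
  proof -
    have "card V \<le> card (Pow K)" unfolding V_def by (rule card_image_le) (simp add: finK)
    also have "\<dots> = s" unfolding s_def using finK cK by (simp add: card_Pow)
    finally show ?thesis .
  qed
  obtain i where i: "i \<le> s" and gapi: "\<forall>v\<in>V. \<not> ((A+n)*L^(2*i) \<le> v \<and> v < (A+n)*L^(2*i+2))"
    using gap_pigeon[OF finV cV L] by blast
  define a where "a = (A+n)*L^(2*i)"
  define g where "g = a * L"
  have L1: "(1::nat) \<le> L^(2*i)" using L by simp
  have ag: "A + n \<le> a" unfolding a_def using L1 by simp
  have "a \<le> g" unfolding g_def using L by simp
  then have g1: "A \<le> g" "n \<le> g" using ag by auto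
  have "g \<le> g * L" using L by simp
  also have "g * L = (A+n)*L^(2*i+2)" unfolding g_def a_def by (simp add: power_add algebra_simps)
  also have "\<dots> \<le> (A+n)*L^(2*(2^(n choose k)+1))"
    using i L unfolding s_def by (intro mult_le_mono2 power_increasing) auto
  also have "\<dots> \<le> ramsey_number k n (complete_kgraph k n)" by (rule big)
  finally have g2: "g \<le> ramsey_number k n (complete_kgraph k n)" .
  have "gapc k n g L"
    unfolding gapc_def
  proof (intro allI impI)
    fix E assume E: "kgraph k n E"
    have "E \<in> Pow K" using E unfolding kgraph_def K_def complete_kgraph_def by auto
    then have vV: "ramsey_number k n E \<in> V" unfolding V_def by blast
    show "ramsey_number k n E * L \<le> g \<or> g * L \<le> ramsey_number k n E"
    proof (cases "ramsey_number k n E < a")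
      case True
      then have "ramsey_number k n E * L \<le> a * L" by simp
      then show ?thesis unfolding g_def by simp
    next
      case False
      then have "\<not> ramsey_number k n E < (A+n)*L^(2*i+2)" using gapi vV unfolding a_def by auto
      then have "(A+n)*L^(2*i+2) \<le> ramsey_number k n E" by (simp only: not_less)
      moreover have gL: "g * L = (A+n)*L^(2*i+2)" unfolding g_def a_def by (simp add: power_add algebra_simps)
      ultimately have "g * L \<le> ramsey_number k n E" by (simp only: gL)
      then show ?thesis by (rule disjI2)
    qed
  qed
  then show ?thesis using g1 g2 by blast
qed

theorem theorem1p2:
  fixes k :: nat
  assumes "k \<ge> 5"
  shows "\<exists>f :: nat \<Rightarrow> nat. mono f \<and>
     (\<forall>n. n \<le> f n \<and> f n \<le> ramsey_number k n (complete_kgraph k n)) \<and>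
     (\<forall>c C :: real. c > 0 \<longrightarrow> C > 0 \<longrightarrow>
        (\<forall>n0. \<exists>n > n0. \<forall>E. kgraph k n E \<longrightarrow>
           real (ramsey_number k n E) \<le> c * real (f n) \<or>
           real (ramsey_number k n E) \<ge> C * real (f n)))"
proof -
  have k: "k \<ge> 5" by (rule assms)
  define RK where "RK n = ramsey_number k n (complete_kgraph k n)" for n
  have key: "\<exists>q. fst p < fst q \<and> snd p \<le> snd q \<and> fst q \<le> snd q \<and> snd q \<le> RK (fst q)
      \<and> gapc k (fst q) (snd q) (Suc j)" for p :: "nat \<times> nat" and j :: nat
  proof -
    obtain n where n: "n > fst p" "(snd p + n) * (Suc j)^(2*(2^(n choose k)+1)) \<le> RK n"
      using growth[OF k, of "fst p" "snd p" "Suc j"] unfolding RK_def by blast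
    obtain g where g: "snd p \<le> g" "n \<le> g" "g \<le> RK n" "gapc k n g (Suc j)"
      using gap_main[OF n(2)[unfolded RK_def]] unfolding RK_def by auto
    show ?thesis using n g by (intro exI[where x="(n, g)"]) simp
  qed
  define step where "step j p = (SOME q. fst p < fst q \<and> snd p \<le> snd q \<and> fst q \<le> snd q
      \<and> snd q \<le> RK (fst q) \<and> gapc k (fst q) (snd q) (Suc j))" for j :: nat and p :: "nat \<times> nat"
  have stepP: "fst p < fst (step j p) \<and> snd p \<le> snd (step j p) \<and> fst (step j p) \<le> snd (step j p)
      \<and> snd (step j p) \<le> RK (fst (step j p)) \<and> gapc k (fst (step j p)) (snd (step j p)) (Suc j)" for j p
    unfolding step_def by (rule someI_ex[OF key])
  define seq where "seq = rec_nat ((0::nat), (0::nat)) step"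
  have seq0: "seq 0 = (0, 0)" unfolding seq_def by simp
  have seqS: "seq (Suc j) = step j (seq j)" for j unfolding seq_def by simp
  define N where "N j = fst (seq j)" for j
  define G where "G j = snd (seq j)" for j
  have NS: "N j < N (Suc j)" for j unfolding N_def seqS using stepP by blast
  have GS: "G j \<le> G (Suc j)" for j unfolding G_def seqS using stepP by blast
  have NG: "N j \<le> G j" for j
  proof (cases j)
    case 0 then show ?thesis unfolding N_def G_def using seq0 by simp
  next
    case (Suc i) then show ?thesis unfolding N_def G_def using seqS stepP by metis
  qed
  have GR: "G j \<le> RK (N j)" for j
  proof (cases j)
    case 0 then show ?thesis unfolding N_def G_def using seq0 by simp
  next
    case (Suc i) then show ?thesis unfolding N_def G_def using seqS stepP by metis
  qed
  have gap: "gapc k (N (Suc j)) (G (Suc j)) (Suc j)" for j unfolding N_def G_def seqS using stepP by blast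
  have smN: "strict_mono N" unfolding strict_mono_def using lift_Suc_mono_less[of N] NS by blast
  have jN: "j \<le> N j" for j using strict_mono_imp_increasing[OF smN] .
  have Gmono: "i \<le> j \<Longrightarrow> G i \<le> G j" for i j using lift_Suc_mono_le[of G] GS by blast
  have RKmono: "a \<le> b \<Longrightarrow> RK a \<le> RK b" for a b unfolding RK_def by (rule ramsey_complete_mono)
  define Jm where "Jm m = {j. N j \<le> m}" for m
  have finJ: "finite (Jm m)" for m
  proof -
    have "Jm m \<subseteq> {..m}" unfolding Jm_def using jN le_trans by fastforce
    then show ?thesis by (rule finite_subset) simp
  qed
  have N0: "N 0 = 0" unfolding N_def seq0 by simp
  have neJ: "Jm m \<noteq> {}" for m unfolding Jm_def using N0 by (metis (mono_tags) empty_iff le0 mem_Collect_eq)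
  define f where "f m = max m (Max (G ` Jm m))" for m
  have fmono: "mono f"
  proof (rule monoI)
    fix m m' :: nat assume mm: "m \<le> m'"
    have "Jm m \<subseteq> Jm m'" unfolding Jm_def using mm by auto
    then have "Max (G ` Jm m) \<le> Max (G ` Jm m')"
      using neJ finJ by (intro Max_mono) auto
    then show "f m \<le> f m'" unfolding f_def using mm by (intro max.mono)
  qed
  have fbounds: "m \<le> f m \<and> f m \<le> RK m" for m
  proof
    show "m \<le> f m" unfolding f_def by simp
    have "Max (G ` Jm m) \<in> G ` Jm m" using neJ finJ by (intro Max_in) auto
    then obtain j where j: "N j \<le> m" "Max (G ` Jm m) = G j" unfolding Jm_def by auto
    have "G j \<le> RK (N j)" by (rule GR)
    also have "\<dots> \<le> RK m" using j(1) by (rule RKmono)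
    finally have "Max (G ` Jm m) \<le> RK m" using j(2) by simp
    moreover have "m \<le> RK m" unfolding RK_def by (rule n_le_ramsey_complete)
    ultimately show "f m \<le> RK m" unfolding f_def by simp
  qed
  have fN: "f (N j) = G j" for j
  proof -
    have "Jm (N j) = {..j}" unfolding Jm_def using strict_mono_less_eq[OF smN] by auto
    moreover have "Max (G ` {..j}) = G j"
    proof (rule Max_eqI)
      show "finite (G ` {..j})" by simp
      show "G j \<in> G ` {..j}" by simp
      show "y \<le> G j" if "y \<in> G ` {..j}" for y using that Gmono by auto
    qed
    ultimately show ?thesis unfolding f_def using NG[of j] by simp
  qed
  have main: "\<exists>n > n0. \<forall>E. kgraph k n E \<longrightarrow>
           real (ramsey_number k n E) \<le> c * real (f n) \<or>
           real (ramsey_number k n E) \<ge> C * real (f n)" if c: "c > 0" and C: "C > 0" for c C :: real and n0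
  proof -
    define j where "j = n0 + nat \<lceil>1/c\<rceil> + nat \<lceil>C\<rceil>"
    define L where "L = Suc j"
    have L1: "1/c \<le> real L"
    proof -
      have "1/c \<le> real (nat \<lceil>1/c\<rceil>)" by linarith
      also have "\<dots> \<le> real L" unfolding L_def j_def by simp
      finally show ?thesis .
    qed
    have cL: "1 \<le> c * real L" using L1 c by (simp add: field_simps)
    have CL: "C \<le> real L"
    proof -
      have "C \<le> real (nat \<lceil>C\<rceil>)" by linarith
      also have "\<dots> \<le> real L" unfolding L_def j_def by simp
      finally show ?thesis .
    qed
    define n where "n = N (Suc j)"
    have nn0: "n > n0"
    proof -
      have "Suc j \<le> n" unfolding n_def by (rule jN)
      then show ?thesis unfolding j_def by simp
    qed
    have fn: "f n = G (Suc j)" unfolding n_def by (rule fN)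
    have gp: "gapc k n (f n) L" unfolding fn unfolding n_def L_def by (rule gap)
    have "\<forall>E. kgraph k n E \<longrightarrow>
           real (ramsey_number k n E) \<le> c * real (f n) \<or>
           real (ramsey_number k n E) \<ge> C * real (f n)"
    proof (intro allI impI)
      fix E assume E: "kgraph k n E"
      define R where "R = ramsey_number k n E"
      have "R * L \<le> f n \<or> f n * L \<le> R" using gp E unfolding gapc_def R_def by blast
      then show "real (ramsey_number k n E) \<le> c * real (f n) \<or> real (ramsey_number k n E) \<ge> C * real (f n)"
      proof
        assume h: "R * L \<le> f n"
        have h': "real R * real L \<le> real (f n)" using h by (metis of_nat_le_iff of_nat_mult)
        have "real R = real R * 1" by simp
        also have "\<dots> \<le> real R * (c * real L)" using cL by (intro mult_left_mono) auto
        also have "\<dots> = c * (real R * real L)" by simp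
        also have "\<dots> \<le> c * real (f n)" using h' c by (intro mult_left_mono) auto
        finally have "real R \<le> c * real (f n)" .
        then show ?thesis unfolding R_def by (rule disjI1)
      next
        assume h: "f n * L \<le> R"
        have h': "real (f n) * real L \<le> real R" using h by (metis of_nat_le_iff of_nat_mult)
        have "C * real (f n) \<le> real L * real (f n)" using CL by (intro mult_right_mono) auto
        also have "\<dots> \<le> real R" using h' by (simp add: mult.commute)
        finally have "C * real (f n) \<le> real R" .
        then show ?thesis unfolding R_def by (rule disjI2)
      qed
    qed
    then show ?thesis using nn0 by blast
  qed
  show ?thesis
  proof (intro exI[where x=f] conjI allI impI)
    show "mono f" by (rule fmono)
    show "n \<le> f n" for n using fbounds by blast
    show "f n \<le> ramsey_number k n (complete_kgraph k n)" for n using fbounds unfolding RK_def by blast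
    show "\<exists>n > n0. \<forall>E. kgraph k n E \<longrightarrow>
           real (ramsey_number k n E) \<le> c * real (f n) \<or>
           real (ramsey_number k n E) \<ge> C * real (f n)" if "c > 0" "C > 0" for c C :: real and n0
      using main[OF that] .
  qed
qed

end
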